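(* Let $\mu$ be a compactly supported probability measure on $\mathbb{R}^n$ whose support is not included in a hyperplane, and let $K$ be the convex hull of its support. Let $f:\mathbb{R}^n\to\mathbb{R}$ be continuously differentiable and $W$ the convex hull of $\nabla f(K)$. Define $\phi(t)=\inf\{\Lambda^*_\mu(y): f(y)\ge t\}$ for $t\in\mathbb{R}$. Let $t\in\mathbb{R}$, $\delta>0$, and assume $\phi(t-\delta)<\phi(s)$ for all $s>t-\delta$. Then for every $x\in K$, $$f(x)\ge t\ \Longrightarrow\ \sup_{\xi\in W,\ 0\le\theta\le\theta_0}\{\langle\theta\xi,x\rangle-\Lambda_\mu(\theta\xi)-\theta\delta\}\ge\phi(t-\delta),$$ where $\theta_0=\Lambda^*_\mu(x)/\delta$.
   Context: $\Lambda_\mu(\xi)=\log\int e^{\langle\xi,x\rangle}d\mu(x)$ and $\Lambda^*_\mu(y)=\sup_{\xi\in\mathbb{R}^n}\{\langle\xi,y\rangle-\Lambda_\mu(\xi)\}$ its Legendre transform. *)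

theory Defs
  imports "HOL-Probability.Probability"
begin

definition msupport :: "'a::euclidean_space measure \<Rightarrow> 'a set" where
  "msupport \<mu> = {x. \<forall>e>0. emeasure \<mu> (ball x e) > 0}"

definition Lam :: "'a::euclidean_space measure \<Rightarrow> 'a \<Rightarrow> real" where
  "Lam \<mu> \<xi> = ln (\<integral>x. exp (\<xi> \<bullet> x) \<partial>\<mu>)"

definition Lstar :: "'a::euclidean_space measure \<Rightarrow> 'a \<Rightarrow> ereal" where
  "Lstar \<mu> y = (SUP \<xi>. ereal (\<xi> \<bullet> y - Lam \<mu> \<xi>))"

text \<open>phi(t) = inf { Lstar(y) : f(y) >= t } (inf of empty set is +infinity).\<close>
definition phi :: "'a::euclidean_space measure \<Rightarrow> ('a \<Rightarrow> real) \<Rightarrow> real \<Rightarrow> ereal" where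
  "phi \<mu> f t = (INF y\<in>{y. f y \<ge> t}. Lstar \<mu> y)"

end

theory Submission
  imports Defs
begin

lemma AE_msupport:
  fixes \<mu> :: "'a::euclidean_space measure"
  assumes sb: "sets \<mu> = sets borel"
  shows "AE y in \<mu>. y \<in> msupport \<mu>"
proof -
  obtain B :: "'a set set" where B: "countable B" "\<And>C. C\<in>B \<Longrightarrow> open C"
     "\<And>S. open S \<Longrightarrow> \<exists>U. U \<subseteq> B \<and> S = \<Union>U"
    by (metis univ_second_countable)
  let ?I = "{b\<in>B. emeasure \<mu> b = 0}"
  have N: "(\<Union>b\<in>?I. b) \<in> null_sets \<mu>"
  proof (rule null_sets_UN')
    show "countable ?I" using B(1) by simp
    fix b assume "b \<in> ?I"
    then show "b \<in> null_sets \<mu>" using B(2) sb by (auto intro!: null_setsI)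
  qed
  have "{y\<in>space \<mu>. y \<notin> msupport \<mu>} \<subseteq> (\<Union>b\<in>?I. b)"
  proof
    fix y assume "y \<in> {y\<in>space \<mu>. y \<notin> msupport \<mu>}"
    then obtain e where e: "e > 0" "\<not> emeasure \<mu> (ball y e) > 0"
      unfolding msupport_def by auto
    have bs: "ball y e \<in> sets \<mu>" using sb by simp
    obtain U where U: "U \<subseteq> B" "ball y e = \<Union>U" using B(3)[of "ball y e"] by auto
    then obtain b where b: "b \<in> U" "y \<in> b" using e(1) by (metis UnionE centre_in_ball)
    have "b \<in> sets \<mu>" using B(2) U b sb by auto
    then have "emeasure \<mu> b \<le> emeasure \<mu> (ball y e)"
      using U b bs by (intro emeasure_mono) auto
    then have "emeasure \<mu> b = 0" using e(2) by simp
    then show "y \<in> (\<Union>b\<in>?I. b)" using b U by auto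
  qed
  then show ?thesis using N by (rule AE_I'[rotated])
qed

lemma msupport_nonempty:
  fixes \<mu> :: "'a::euclidean_space measure"
  assumes "prob_space \<mu>" "sets \<mu> = sets borel"
  shows "msupport \<mu> \<noteq> {}"
proof
  assume "msupport \<mu> = {}"
  then have "AE y in \<mu>. False" using AE_msupport[OF assms(2)] by simp
  then show False using assms(1) by (simp add: prob_space.AE_False) 
qed

lemma integrable_exp_inner:
  fixes \<mu> :: "'a::euclidean_space measure"
  assumes "prob_space \<mu>" "sets \<mu> = sets borel" "compact (msupport \<mu>)"
  shows "integrable \<mu> (\<lambda>y. exp (\<eta> \<bullet> y))"
proof -
  interpret prob_space \<mu> by fact
  obtain R where R: "\<And>y. y \<in> msupport \<mu> \<Longrightarrow> norm y \<le> R"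
    using compact_imp_bounded[OF assms(3)] bounded_iff by metis
  have m: "(\<lambda>y. exp (\<eta> \<bullet> y)) \<in> borel_measurable \<mu>"
    unfolding measurable_cong_sets[OF assms(2) refl]
    by (intro borel_measurable_continuous_onI continuous_intros)
  show ?thesis
  proof (rule Bochner_Integration.integrable_bound[OF integrable_const[of "exp (norm \<eta> * R)"] m])
    show "AE y in \<mu>. norm (exp (\<eta> \<bullet> y)) \<le> norm (exp (norm \<eta> * R))"
      using AE_msupport[OF assms(2)]
    proof eventually_elim
      case (elim y)
      have "\<eta> \<bullet> y \<le> norm \<eta> * norm y" by (metis Cauchy_Schwarz_ineq2 abs_le_D1)
      also have "\<dots> \<le> norm \<eta> * R" using R[OF elim] by (simp add: mult_left_mono)
      finally show ?case by simp
    qed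
  qed
qed

lemma integral_exp_pos:
  fixes \<mu> :: "'a::euclidean_space measure"
  assumes "prob_space \<mu>" "sets \<mu> = sets borel" "compact (msupport \<mu>)"
  shows "(\<integral>y. exp (\<eta> \<bullet> y) \<partial>\<mu>) > 0"
proof -
  interpret prob_space \<mu> by fact
  have i: "integrable \<mu> (\<lambda>y. exp (\<eta> \<bullet> y))" by (rule integrable_exp_inner[OF assms])
  have "(\<integral>y. exp (\<eta> \<bullet> y) \<partial>\<mu>) \<ge> 0" by simp
  moreover have "(\<integral>y. exp (\<eta> \<bullet> y) \<partial>\<mu>) \<noteq> 0"
  proof
    assume "(\<integral>y. exp (\<eta> \<bullet> y) \<partial>\<mu>) = 0"
    then have "AE y in \<mu>. exp (\<eta> \<bullet> y) = 0" using integral_nonneg_eq_0_iff_AE[OF i] by simp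
    then have "AE y in \<mu>. False" by simp
    then show False by (simp add: AE_False)
  qed
  ultimately show ?thesis by linarith
qed

lemma Lam_zero:
  fixes \<mu> :: "'a::euclidean_space measure"
  assumes "prob_space \<mu>"
  shows "Lam \<mu> 0 = 0"
  using assms by (simp add: Lam_def prob_space.prob_space)


lemma Lam_convex:
  fixes \<mu> :: "'a::euclidean_space measure"
  assumes P: "prob_space \<mu>" "sets \<mu> = sets borel" "compact (msupport \<mu>)"
    and u: "0 \<le> u" "u \<le> 1"
  shows "Lam \<mu> ((1-u) *\<^sub>R a + u *\<^sub>R b) \<le> (1-u) * Lam \<mu> a + u * Lam \<mu> b"
proof -
  interpret prob_space \<mu> by fact
  define A where "A = (\<integral>y. exp (a \<bullet> y) \<partial>\<mu>)"
  define B where "B = (\<integral>y. exp (b \<bullet> y) \<partial>\<mu>)"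
  define C where "C = exp ((1-u) * ln A + u * ln B)"
  have A: "A > 0" unfolding A_def by (rule integral_exp_pos[OF P])
  have B: "B > 0" unfolding B_def by (rule integral_exp_pos[OF P])
  have iA: "integrable \<mu> (\<lambda>y. exp (a \<bullet> y))" by (rule integrable_exp_inner[OF P])
  have iB: "integrable \<mu> (\<lambda>y. exp (b \<bullet> y))" by (rule integrable_exp_inner[OF P])
  have iAB: "integrable \<mu> (\<lambda>y. exp (((1-u) *\<^sub>R a + u *\<^sub>R b) \<bullet> y))" by (rule integrable_exp_inner[OF P])
  have pw: "exp (((1-u) *\<^sub>R a + u *\<^sub>R b) \<bullet> y) \<le> C * ((1-u) * (exp (a \<bullet> y) / A) + u * (exp (b \<bullet> y) / B))" for y
  proof -
    define p where "p = a \<bullet> y - ln A"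
    define q where "q = b \<bullet> y - ln B"
    have "exp ((1-u) *\<^sub>R p + u *\<^sub>R q) \<le> (1-u) * exp p + u * exp q"
      using convex_onD[OF exp_convex, of u p q] u by simp
    moreover have "exp ((1-u) *\<^sub>R p + u *\<^sub>R q) = exp (((1-u) *\<^sub>R a + u *\<^sub>R b) \<bullet> y) / C"
      unfolding C_def p_def q_def by (simp add: inner_add_left algebra_simps exp_diff exp_add)
    moreover have "exp p = exp (a \<bullet> y) / A" "exp q = exp (b \<bullet> y) / B"
      unfolding p_def q_def using A B by (simp_all add: exp_diff)
    ultimately have "exp (((1-u) *\<^sub>R a + u *\<^sub>R b) \<bullet> y) / C \<le> (1-u) * (exp (a \<bullet> y) / A) + u * (exp (b \<bullet> y) / B)"
      by simp
    moreover have "C > 0" unfolding C_def by simp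
    ultimately show ?thesis by (simp add: divide_le_eq mult.commute)
  qed
  have "(\<integral>y. exp (((1-u) *\<^sub>R a + u *\<^sub>R b) \<bullet> y) \<partial>\<mu>) \<le> (\<integral>y. C * ((1-u) * (exp (a \<bullet> y) / A) + u * (exp (b \<bullet> y) / B)) \<partial>\<mu>)"
    using pw iA iB iAB by (intro integral_mono) auto
  also have "\<dots> = C * ((1-u) * (A / A) + u * (B / B))"
    using iA iB unfolding A_def B_def by simp
  also have "\<dots> = C" using A B by simp
  finally have le: "(\<integral>y. exp (((1-u) *\<^sub>R a + u *\<^sub>R b) \<bullet> y) \<partial>\<mu>) \<le> C" .
  have pos: "(\<integral>y. exp (((1-u) *\<^sub>R a + u *\<^sub>R b) \<bullet> y) \<partial>\<mu>) > 0" by (rule integral_exp_pos[OF P])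
  have "Lam \<mu> ((1-u) *\<^sub>R a + u *\<^sub>R b) \<le> ln C"
    unfolding Lam_def using le pos by simp
  also have "ln C = (1-u) * Lam \<mu> a + u * Lam \<mu> b"
    unfolding C_def Lam_def A_def B_def by simp
  finally show ?thesis .
qed

lemma Lstar_ge: "ereal (\<eta> \<bullet> y - Lam \<mu> \<eta>) \<le> Lstar \<mu> y"
  unfolding Lstar_def by (rule SUP_upper) simp

lemma Lstar_nonneg: assumes "prob_space \<mu>" shows "Lstar \<mu> y \<ge> 0"
  using Lstar_ge[of 0 y \<mu>] Lam_zero[OF assms] by (simp add: zero_ereal_def)

lemma Lstar_le_iff: "Lstar \<mu> y \<le> ereal L \<longleftrightarrow> (\<forall>\<eta>. \<eta> \<bullet> y - Lam \<mu> \<eta> \<le> L)"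
  unfolding Lstar_def by (simp add: SUP_le_iff)

lemma Lstar_convex:
  assumes "Lstar \<mu> z \<le> ereal Lz" "Lstar \<mu> x \<le> ereal Lx" "0 \<le> u" "u \<le> 1"
  shows "Lstar \<mu> ((1-u) *\<^sub>R z + u *\<^sub>R x) \<le> ereal ((1-u) * Lz + u * Lx)"
  unfolding Lstar_le_iff
proof
  fix \<eta>
  have 1: "\<eta> \<bullet> z - Lam \<mu> \<eta> \<le> Lz" "\<eta> \<bullet> x - Lam \<mu> \<eta> \<le> Lx" using assms(1,2) unfolding Lstar_le_iff by auto
  have "\<eta> \<bullet> ((1-u) *\<^sub>R z + u *\<^sub>R x) - Lam \<mu> \<eta> = (1-u) * (\<eta> \<bullet> z - Lam \<mu> \<eta>) + u * (\<eta> \<bullet> x - Lam \<mu> \<eta>)"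
    by (simp add: inner_add_right algebra_simps)
  also have "\<dots> \<le> (1-u) * Lz + u * Lx"
    using 1 assms(3,4) by (intro add_mono mult_left_mono) auto
  finally show "\<eta> \<bullet> ((1-u) *\<^sub>R z + u *\<^sub>R x) - Lam \<mu> \<eta> \<le> (1-u) * Lz + u * Lx" .
qed

lemma Lstar_finite_in_hull:
  fixes \<mu> :: "'a::euclidean_space measure"
  assumes P: "prob_space \<mu>" "sets \<mu> = sets borel" "compact (msupport \<mu>)"
    and L: "Lstar \<mu> z \<le> ereal L"
  shows "z \<in> convex hull (msupport \<mu>)"
proof (rule ccontr)
  interpret prob_space \<mu> by fact
  assume nz: "z \<notin> convex hull (msupport \<mu>)"
  have "compact (convex hull (msupport \<mu>))" using P(3) by (rule compact_convex_hull)
  then obtain a b where ab: "a \<bullet> z < b" "\<forall>y\<in>convex hull (msupport \<mu>). a \<bullet> y > b"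
    using separating_hyperplane_closed_point[OF convex_convex_hull _ nz] compact_imp_closed by blast
  have key: "s * (b - a \<bullet> z) \<le> L" if s: "s \<ge> 0" for s
  proof -
    have ae: "AE y in \<mu>. exp ((- s *\<^sub>R a) \<bullet> y) \<le> exp (- s * b)"
      using AE_msupport[OF P(2)]
    proof eventually_elim
      case (elim y)
      then have "a \<bullet> y > b" using ab(2) hull_inc[of y "msupport \<mu>"] by auto
      then have "s * b \<le> s * (a \<bullet> y)" using s by (intro mult_left_mono) auto
      then show ?case by simp
    qed
    have "(\<integral>y. exp ((- s *\<^sub>R a) \<bullet> y) \<partial>\<mu>) \<le> (\<integral>y. exp (- s * b) \<partial>\<mu>)"
      by (rule integral_mono_AE[OF integrable_exp_inner[OF P] _ ae]) simp
    then have "(\<integral>y. exp ((- s *\<^sub>R a) \<bullet> y) \<partial>\<mu>) \<le> exp (- s * b)" by (simp add: prob_space)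
    then have "Lam \<mu> (- s *\<^sub>R a) \<le> - s * b"
      unfolding Lam_def using integral_exp_pos[OF P, of "- s *\<^sub>R a"]
      by (metis ln_exp ln_le_cancel_iff exp_gt_zero)
    moreover have "(- s *\<^sub>R a) \<bullet> z - Lam \<mu> (- s *\<^sub>R a) \<le> L" using L unfolding Lstar_le_iff by blast
    ultimately show ?thesis by (simp add: algebra_simps)
  qed
  have "b - a \<bullet> z > 0" using ab by simp
  then have "(\<bar>L\<bar> + 1) / (b - a \<bullet> z) * (b - a \<bullet> z) = \<bar>L\<bar> + 1" by simp
  moreover have "(\<bar>L\<bar> + 1) / (b - a \<bullet> z) * (b - a \<bullet> z) \<le> L"
    using \<open>b - a \<bullet> z > 0\<close> by (intro key) simp
  ultimately show False by linarith
qed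


lemma duality_step:
  fixes \<mu> :: "'a::euclidean_space measure"
  assumes P: "prob_space \<mu>" "sets \<mu> = sets borel" "compact (msupport \<mu>)"
    and W: "convex W" "W \<noteq> {}"
    and T: "T \<ge> 0"
    and H: "\<And>\<xi> \<theta>. \<xi> \<in> W \<Longrightarrow> 0 \<le> \<theta> \<Longrightarrow> ereal \<theta> \<le> T \<Longrightarrow> \<theta> * (\<xi> \<bullet> x) - Lam \<mu> (\<theta> *\<^sub>R \<xi>) - \<theta> * \<delta> < c"
  shows "\<exists>z L. Lstar \<mu> z \<le> ereal L \<and> (\<forall>\<xi>\<in>W. \<forall>\<theta>. 0 \<le> \<theta> \<longrightarrow> ereal \<theta> \<le> T \<longrightarrow> L + \<theta> * (\<xi> \<bullet> (x - z)) - \<theta> * \<delta> \<le> c)"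
proof -
  define Q :: "('a \<times> real) set" where "Q = {(\<theta> *\<^sub>R \<xi>, r) | \<xi> \<theta> r. \<xi> \<in> W \<and> 0 \<le> \<theta> \<and> ereal \<theta> \<le> T \<and> r \<le> \<theta> * (\<xi> \<bullet> x) - \<theta> * \<delta> - c}"
  define E :: "('a \<times> real) set" where "E = {p. Lam \<mu> (fst p) \<le> snd p}"
  have cE: "convex E"
    unfolding convex_def E_def
  proof (safe)
    fix a r b s :: "_" and u v :: real
    assume 1: "Lam \<mu> (fst (a, r)) \<le> snd (a, r)" "Lam \<mu> (fst (b, s)) \<le> snd (b, s)" "0 \<le> u" "0 \<le> v" "u + v = 1"
    then have "u = 1 - v" by simp
    have "Lam \<mu> ((1-v) *\<^sub>R a + v *\<^sub>R b) \<le> (1-v) * Lam \<mu> a + v * Lam \<mu> b"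
      using 1 by (intro Lam_convex[OF P]) auto
    also have "\<dots> \<le> (1-v) * r + v * s" using 1 by (intro add_mono mult_left_mono) auto
    finally show "Lam \<mu> (fst (u *\<^sub>R (a, r) + v *\<^sub>R (b, s))) \<le> snd (u *\<^sub>R (a, r) + v *\<^sub>R (b, s))"
      using \<open>u = 1 - v\<close> by simp
  qed
  have cQ: "convex Q"
    unfolding convex_def
  proof (intro ballI allI impI)
    fix p q :: "'a \<times> real" and u v :: real
    assume "p \<in> Q" "q \<in> Q" and uv: "0 \<le> u" "0 \<le> v" "u + v = 1"
    then obtain \<xi>1 \<theta>1 r1 \<xi>2 \<theta>2 r2 where p: "p = (\<theta>1 *\<^sub>R \<xi>1, r1)" "\<xi>1 \<in> W" "0 \<le> \<theta>1" "ereal \<theta>1 \<le> T" "r1 \<le> \<theta>1 * (\<xi>1 \<bullet> x) - \<theta>1 * \<delta> - c"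
      and q: "q = (\<theta>2 *\<^sub>R \<xi>2, r2)" "\<xi>2 \<in> W" "0 \<le> \<theta>2" "ereal \<theta>2 \<le> T" "r2 \<le> \<theta>2 * (\<xi>2 \<bullet> x) - \<theta>2 * \<delta> - c"
      unfolding Q_def by blast
    define \<theta> where "\<theta> = u * \<theta>1 + v * \<theta>2"
    have th0: "0 \<le> \<theta>" unfolding \<theta>_def using uv p q by simp
    have "\<theta> \<le> max \<theta>1 \<theta>2"
    proof -
      have "\<theta> \<le> u * max \<theta>1 \<theta>2 + v * max \<theta>1 \<theta>2" unfolding \<theta>_def
        using uv by (intro add_mono mult_left_mono) auto
      moreover have "u * max \<theta>1 \<theta>2 + v * max \<theta>1 \<theta>2 = max \<theta>1 \<theta>2"
        using uv(3) by (metis distrib_right mult_1)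
      ultimately show ?thesis by simp
    qed
    then have thT: "ereal \<theta> \<le> T" using p(4) q(4) by (cases "\<theta>1 \<le> \<theta>2") (auto simp: max_def, (metis ereal_less_eq(3) order.trans)+)
    have r: "u * r1 + v * r2 \<le> u * (\<theta>1 * (\<xi>1 \<bullet> x) - \<theta>1 * \<delta> - c) + v * (\<theta>2 * (\<xi>2 \<bullet> x) - \<theta>2 * \<delta> - c)"
      using uv p q by (intro add_mono mult_left_mono) auto
    show "u *\<^sub>R p + v *\<^sub>R q \<in> Q"
    proof (cases "\<theta> = 0")
      case True
      then have "u * \<theta>1 = 0" "v * \<theta>2 = 0" using uv p(3) q(3) unfolding \<theta>_def
        by (smt (verit) mult_nonneg_nonneg)+
      note z = this
      have "u *\<^sub>R p + v *\<^sub>R q = ((u * \<theta>1) *\<^sub>R \<xi>1 + (v * \<theta>2) *\<^sub>R \<xi>2, u * r1 + v * r2)"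
        using p(1) q(1) by simp
      also have "\<dots> = (0 *\<^sub>R \<xi>1, u * r1 + v * r2)" unfolding z by simp
      finally have e: "u *\<^sub>R p + v *\<^sub>R q = (0 *\<^sub>R \<xi>1, u * r1 + v * r2)" .
      have "u * (\<theta>1 * (\<xi>1 \<bullet> x) - \<theta>1 * \<delta> - c) + v * (\<theta>2 * (\<xi>2 \<bullet> x) - \<theta>2 * \<delta> - c)
         = (u * \<theta>1) * (\<xi>1 \<bullet> x) - (u * \<theta>1) * \<delta> + (v * \<theta>2) * (\<xi>2 \<bullet> x) - (v * \<theta>2) * \<delta> - (u + v) * c"
        by (simp add: algebra_simps)
      also have "\<dots> = - c" unfolding z uv(3) by simp
      finally have rr: "u * r1 + v * r2 \<le> 0 * (\<xi>1 \<bullet> x) - 0 * \<delta> - c" using r by simp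
      have T0: "ereal 0 \<le> T" using p(3,4) by (metis ereal_less_eq(3) order.trans)
      show ?thesis unfolding Q_def e using p(2) rr T0 by (intro CollectI exI[of _ \<xi>1] exI[of _ 0] exI[of _ "u * r1 + v * r2"]) simp
    next
      case False
      then have tp: "\<theta> > 0" using th0 by simp
      define \<xi> where "\<xi> = (u * \<theta>1 / \<theta>) *\<^sub>R \<xi>1 + (v * \<theta>2 / \<theta>) *\<^sub>R \<xi>2"
      have "\<xi> \<in> W" unfolding \<xi>_def
        using tp uv p q by (intro convexD[OF W(1)]) (auto simp: \<theta>_def add_divide_distrib[symmetric])
      have e1: "\<theta> *\<^sub>R \<xi> = (u * \<theta>1) *\<^sub>R \<xi>1 + (v * \<theta>2) *\<^sub>R \<xi>2"
        unfolding \<xi>_def using tp by (simp add: scaleR_add_right)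
      have e2: "u *\<^sub>R p + v *\<^sub>R q = (\<theta> *\<^sub>R \<xi>, u * r1 + v * r2)"
        using p q e1 by simp
      have "\<theta> * (\<xi> \<bullet> x) = (\<theta> *\<^sub>R \<xi>) \<bullet> x" by simp
      also have "\<dots> = u * (\<theta>1 * (\<xi>1 \<bullet> x)) + v * (\<theta>2 * (\<xi>2 \<bullet> x))"
        unfolding e1 by (simp add: inner_add_left)
      finally have e3: "\<theta> * (\<xi> \<bullet> x) = u * (\<theta>1 * (\<xi>1 \<bullet> x)) + v * (\<theta>2 * (\<xi>2 \<bullet> x))" .
      have "u * r1 + v * r2 \<le> \<theta> * (\<xi> \<bullet> x) - \<theta> * \<delta> - c"
      proof -
        have v: "v = 1 - u" using uv(3) by simp
        have "u * (\<theta>1 * (\<xi>1 \<bullet> x) - \<theta>1 * \<delta> - c) + v * (\<theta>2 * (\<xi>2 \<bullet> x) - \<theta>2 * \<delta> - c) = \<theta> * (\<xi> \<bullet> x) - \<theta> * \<delta> - c"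
          unfolding e3 by (simp add: \<theta>_def v algebra_simps)
        then show ?thesis using r by simp
      qed
      then show ?thesis unfolding Q_def e2 using \<open>\<xi> \<in> W\<close> th0 thT by blast
    qed
  qed
  obtain \<xi>0 where "\<xi>0 \<in> W" using W(2) by blast
  moreover have "ereal 0 \<le> T" using T by (metis zero_ereal_def)
  ultimately have "(0 *\<^sub>R \<xi>0, - c) \<in> Q" unfolding Q_def
    by (intro CollectI exI[of _ \<xi>0] exI[of _ "0::real"] exI[of _ "-c"]) simp
  then have nQ: "Q \<noteq> {}" by blast
  have nE: "E \<noteq> {}" unfolding E_def by auto
  have dis: "Q \<inter> E = {}"
  proof (safe)
    fix \<eta> r assume "(\<eta>, r) \<in> Q" "(\<eta>, r) \<in> E"
    then obtain \<xi> \<theta> where "\<eta> = \<theta> *\<^sub>R \<xi>" "\<xi> \<in> W" "0 \<le> \<theta>" "ereal \<theta> \<le> T" "r \<le> \<theta> * (\<xi> \<bullet> x) - \<theta> * \<delta> - c"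
      "Lam \<mu> \<eta> \<le> r" unfolding Q_def E_def by auto
    with H[of \<xi> \<theta>] show "(\<eta>, r) \<in> {}" by simp
  qed
  obtain a b where ab: "a \<noteq> 0" "\<forall>p\<in>Q. a \<bullet> p \<le> b" "\<forall>p\<in>E. a \<bullet> p \<ge> b"
    using separating_hyperplane_sets[OF cQ cE nQ nE dis] by blast
  obtain a1 a0 where a: "a = (a1, a0)" by (cases a)
  have Eb: "a1 \<bullet> \<eta> + a0 * r \<ge> b" if "Lam \<mu> \<eta> \<le> r" for \<eta> r
    using ab(3) that unfolding E_def a by auto
  have a0nn: "a0 \<ge> 0"
  proof (rule ccontr)
    assume "\<not> a0 \<ge> 0"
    then have n: "a0 < 0" by simp
    define k where "k = (\<bar>b\<bar> + \<bar>a0 * Lam \<mu> 0\<bar> + 1) / (- a0)"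
    have "k \<ge> 0" unfolding k_def using n by (intro divide_nonneg_pos) auto
    then have "a1 \<bullet> 0 + a0 * (Lam \<mu> 0 + k) \<ge> b" by (intro Eb) simp
    moreover have "a0 * k = - (\<bar>b\<bar> + \<bar>a0 * Lam \<mu> 0\<bar> + 1)" unfolding k_def using n by simp
    ultimately show False by (simp add: distrib_left)
  qed
  have a0nz: "a0 \<noteq> 0"
  proof
    assume z: "a0 = 0"
    then have "a1 \<noteq> 0" using ab(1) a by (auto simp: zero_prod_def)
    then have pos: "a1 \<bullet> a1 > 0" by simp
    define s where "s = (\<bar>b\<bar> + 1) / (a1 \<bullet> a1)"
    have "a1 \<bullet> (- s *\<^sub>R a1) + a0 * Lam \<mu> (- s *\<^sub>R a1) \<ge> b" by (intro Eb) simp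
    moreover have "a1 \<bullet> (- s *\<^sub>R a1) = - (\<bar>b\<bar> + 1)" unfolding s_def using pos by simp
    ultimately show False using z by simp
  qed
  with a0nn have a0p: "a0 > 0" by simp
  define z where "z = - (1 / a0) *\<^sub>R a1"
  define L where "L = - b / a0"
  have "Lstar \<mu> z \<le> ereal L" unfolding Lstar_le_iff
  proof
    fix \<eta>
    have "a1 \<bullet> \<eta> + a0 * Lam \<mu> \<eta> \<ge> b" by (intro Eb) simp
    then have "(a1 \<bullet> \<eta> + a0 * Lam \<mu> \<eta>) / a0 \<ge> b / a0" using a0p by (simp add: divide_right_mono)
    then show "\<eta> \<bullet> z - Lam \<mu> \<eta> \<le> L" unfolding z_def L_def using a0p
      by (simp add: add_divide_distrib inner_commute)
  qed
  moreover have "\<forall>\<xi>\<in>W. \<forall>\<theta>. 0 \<le> \<theta> \<longrightarrow> ereal \<theta> \<le> T \<longrightarrow> L + \<theta> * (\<xi> \<bullet> (x - z)) - \<theta> * \<delta> \<le> c"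
  proof (intro ballI allI impI)
    fix \<xi> \<theta> assume h: "\<xi> \<in> W" "0 \<le> \<theta>" "ereal \<theta> \<le> T"
    then have "(\<theta> *\<^sub>R \<xi>, \<theta> * (\<xi> \<bullet> x) - \<theta> * \<delta> - c) \<in> Q" unfolding Q_def by blast
    then have "a1 \<bullet> (\<theta> *\<^sub>R \<xi>) + a0 * (\<theta> * (\<xi> \<bullet> x) - \<theta> * \<delta> - c) \<le> b" using ab(2) a by auto
    then have "(a1 \<bullet> (\<theta> *\<^sub>R \<xi>) + a0 * (\<theta> * (\<xi> \<bullet> x) - \<theta> * \<delta> - c)) / a0 \<le> b / a0"
      using a0p by (simp add: divide_right_mono)
    then show "L + \<theta> * (\<xi> \<bullet> (x - z)) - \<theta> * \<delta> \<le> c" unfolding z_def L_def using a0p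
      by (simp add: add_divide_distrib diff_divide_distrib inner_diff_right inner_commute algebra_simps)
  qed
  ultimately show ?thesis by blast
qed


theorem lemma6p1:
  fixes \<mu> :: "'a::euclidean_space measure" and f :: "'a \<Rightarrow> real" and g :: "'a \<Rightarrow> 'a"
    and t \<delta> :: real
  assumes "prob_space \<mu>" and "sets \<mu> = sets borel"
    and "compact (msupport \<mu>)"
    and "\<not> (\<exists>a b. a \<noteq> 0 \<and> msupport \<mu> \<subseteq> {x. a \<bullet> x = b})"
    and "\<And>x. GDERIV f x :> g x" and "continuous_on UNIV g"
    and "\<delta> > 0"
    and "\<And>s. s > t - \<delta> \<Longrightarrow> phi \<mu> f (t - \<delta>) < phi \<mu> f s"
  shows "\<forall>x \<in> convex hull (msupport \<mu>). f x \<ge> t \<longrightarrow>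
    (SUP p \<in> {(\<xi>, \<theta>). \<xi> \<in> convex hull (g ` (convex hull (msupport \<mu>))) \<and> 0 \<le> \<theta>
                       \<and> ereal \<theta> \<le> Lstar \<mu> x / ereal \<delta>}.
       ereal ((snd p *\<^sub>R fst p) \<bullet> x - Lam \<mu> (snd p *\<^sub>R fst p) - snd p * \<delta>))
    \<ge> phi \<mu> f (t - \<delta>)"
proof (intro ballI impI)
  note P = assms(1,2,3)
  have dpos: "\<delta> > 0" by fact
  define K where "K = convex hull (msupport \<mu>)"
  define W where "W = convex hull (g ` K)"
  fix x assume xK: "x \<in> convex hull (msupport \<mu>)" and fx: "f x \<ge> t"
  then have xK: "x \<in> K" unfolding K_def by simp
  define T where "T = Lstar \<mu> x / ereal \<delta>"
  define S where "S = {(\<xi>, \<theta>). \<xi> \<in> W \<and> 0 \<le> \<theta> \<and> ereal \<theta> \<le> T}"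
  define F where "F = (\<lambda>p. ereal ((snd p *\<^sub>R fst p) \<bullet> x - Lam \<mu> (snd p *\<^sub>R fst p) - snd p * \<delta>))"
  have lx0: "Lstar \<mu> x \<ge> 0" by (rule Lstar_nonneg[OF P(1)])
  have T0: "T \<ge> 0" unfolding T_def using lx0 dpos
    by (cases "Lstar \<mu> x") auto
  have convK: "convex K" unfolding K_def by simp
  have Kne: "K \<noteq> {}" unfolding K_def using msupport_nonempty[OF P(1,2)] by simp
  have Wc: "convex W" unfolding W_def by simp
  have Wne: "W \<noteq> {}" unfolding W_def using Kne by simp
  have phi_le: "phi \<mu> f (t - \<delta>) \<le> Lstar \<mu> w" if "f w \<ge> t - \<delta>" for w
    unfolding phi_def using that by (intro INF_lower) simp
  show "(SUP p \<in> {(\<xi>, \<theta>). \<xi> \<in> convex hull (g ` (convex hull (msupport \<mu>))) \<and> 0 \<le> \<theta>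
                       \<and> ereal \<theta> \<le> Lstar \<mu> x / ereal \<delta>}.
       ereal ((snd p *\<^sub>R fst p) \<bullet> x - Lam \<mu> (snd p *\<^sub>R fst p) - snd p * \<delta>))
    \<ge> phi \<mu> f (t - \<delta>)"
    unfolding K_def[symmetric] W_def[symmetric] T_def[symmetric] S_def[symmetric] F_def[symmetric]
  proof (rule ccontr)
    assume "\<not> phi \<mu> f (t - \<delta>) \<le> (SUP p\<in>S. F p)"
    then have lt: "(SUP p\<in>S. F p) < phi \<mu> f (t - \<delta>)" by simp
    obtain \<xi>0 where "\<xi>0 \<in> W" using Wne by blast
    then have "(\<xi>0, 0) \<in> S" unfolding S_def using T0 by (simp add: zero_ereal_def)
    then have "F (\<xi>0, 0) \<le> (SUP p\<in>S. F p)" by (rule SUP_upper)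
    then have sup0: "0 \<le> (SUP p\<in>S. F p)" unfolding F_def using Lam_zero[OF P(1)] by (simp add: zero_ereal_def)
    obtain c where c: "(SUP p\<in>S. F p) < ereal c" "ereal c < phi \<mu> f (t - \<delta>)"
      using ereal_dense2[OF lt] by blast
    have "(0::ereal) < ereal c" using sup0 c(1) by (rule order.strict_trans1)
    then have c0: "c > 0" by simp
    have H: "\<theta> * (\<xi> \<bullet> x) - Lam \<mu> (\<theta> *\<^sub>R \<xi>) - \<theta> * \<delta> < c" if "\<xi> \<in> W" "0 \<le> \<theta>" "ereal \<theta> \<le> T" for \<xi> \<theta>
    proof -
      have "(\<xi>, \<theta>) \<in> S" unfolding S_def using that by simp
      then have "F (\<xi>, \<theta>) \<le> (SUP p\<in>S. F p)" by (rule SUP_upper)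
      then have "F (\<xi>, \<theta>) < ereal c" using c(1) by simp
      then show ?thesis unfolding F_def by simp
    qed
    obtain z L where zL: "Lstar \<mu> z \<le> ereal L"
      "\<And>\<xi> \<theta>. \<xi> \<in> W \<Longrightarrow> 0 \<le> \<theta> \<Longrightarrow> ereal \<theta> \<le> T \<Longrightarrow> L + \<theta> * (\<xi> \<bullet> (x - z)) - \<theta> * \<delta> \<le> c"
      using duality_step[OF P Wc Wne T0 H] by blast
    have Lc: "L \<le> c" using zL(2)[OF \<open>\<xi>0 \<in> W\<close>, of 0] T0 by (simp add: zero_ereal_def)
    have zK: "z \<in> K" unfolding K_def by (rule Lstar_finite_in_hull[OF P zL(1)])
    show False
    proof (cases "f z \<ge> t - \<delta>")
      case True
      then have "phi \<mu> f (t - \<delta>) \<le> ereal L" using phi_le zL(1) by (metis order.trans)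
      also have "\<dots> \<le> ereal c" using Lc by simp
      finally show False using c(2) by simp
    next
      case False
      then have fz: "f z < t - \<delta>" by simp
      define h where "h = (\<lambda>s. f (z + s *\<^sub>R (x - z)))"
      have hd: "(h has_derivative (\<lambda>d. (d *\<^sub>R (x - z)) \<bullet> g (z + s *\<^sub>R (x - z)))) (at s within X)" for s X
      proof -
        have dl: "((\<lambda>s. z + s *\<^sub>R (x - z)) has_derivative (\<lambda>d. d *\<^sub>R (x - z))) (at s within X)"
          by (auto intro!: derivative_eq_intros)
        have "(f has_derivative (\<lambda>d. d \<bullet> g (z + s *\<^sub>R (x - z)))) (at (z + s *\<^sub>R (x - z)))"
          using assms(5) unfolding gderiv_def by blast
        from has_derivative_compose[OF dl this] show ?thesis unfolding h_def .
      qed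
      have hc: "continuous_on {0..1} h"
        using hd has_derivative_continuous by (intro continuous_at_imp_continuous_on) blast
      have h0: "h 0 = f z" and h1: "h 1 = f x" unfolding h_def by simp_all
      obtain l where l: "0 \<le> l" "l \<le> 1" "h l = t - \<delta>"
        using IVT'[of h 0 "t - \<delta>" 1, OF _ _ _ hc] h0 h1 fz fx dpos by auto
      have l1: "l < 1" using l h1 fx dpos by (cases "l = 1") auto
      have l0: "l > 0" using l h0 fz by (cases "l = 0") auto
      obtain s where s: "s \<in> {l<..<1}" "h 1 - h l = (((1 - l) *\<^sub>R (x - z)) \<bullet> g (z + s *\<^sub>R (x - z)))"
        using mvt_simple[OF l1, of h "\<lambda>s d. (d *\<^sub>R (x - z)) \<bullet> g (z + s *\<^sub>R (x - z))", OF hd] by blast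
      define p where "p = z + s *\<^sub>R (x - z)"
      have "p = (1 - s) *\<^sub>R z + s *\<^sub>R x" unfolding p_def by (simp add: algebra_simps)
      then have pK: "p \<in> K" using s(1) l0 zK xK by (auto intro!: convexD[OF convK])
      define \<xi> where "\<xi> = g p"
      have \<xi>W: "\<xi> \<in> W" unfolding W_def \<xi>_def using pK by (intro hull_inc) simp
      define k where "k = \<xi> \<bullet> (x - z)"
      have kk: "(1 - l) * k = f x - (t - \<delta>)" using s(2) h1 l(3) unfolding k_def \<xi>_def p_def
        by (simp add: inner_commute)
      then have kd: "(1 - l) * k \<ge> \<delta>" using fx by simp
      have kd2: "(1 - l) * (k - \<delta>) \<ge> \<delta> * l" using kd by (simp add: algebra_simps)
      have kpos: "k - \<delta> > 0"
      proof -
        have "\<delta> * l > 0" using dpos l0 by simp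
        then have "(1 - l) * (k - \<delta>) > 0" using kd2 by linarith
        then show ?thesis using l1 by (simp add: zero_less_mult_iff)
      qed
      define w where "w = (1 - l) *\<^sub>R z + l *\<^sub>R x"
      have fw: "f w = t - \<delta>" using l(3) unfolding h_def w_def by (simp add: algebra_simps)
      have phw: "phi \<mu> f (t - \<delta>) \<le> Lstar \<mu> w" using phi_le fw by simp
      show False
      proof (cases "Lstar \<mu> x")
        case PInf
        then have "T = \<infinity>" unfolding T_def using dpos by simp
        define \<theta> where "\<theta> = (c - L + 1) / (k - \<delta>)"
        have th0: "\<theta> \<ge> 0" unfolding \<theta>_def using kpos Lc by simp
        have "L + \<theta> * (\<xi> \<bullet> (x - z)) - \<theta> * \<delta> \<le> c" using zL(2)[OF \<xi>W th0] \<open>T = \<infinity>\<close> by simp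
        moreover have "\<theta> * (k - \<delta>) = c - L + 1" unfolding \<theta>_def using kpos by simp
        ultimately show False unfolding k_def by (simp add: algebra_simps)
      next
        case MInf then show False using lx0 by simp
      next
        case (real Lx)
        then have Lx0: "Lx \<ge> 0" using lx0 by simp
        have TT: "T = ereal (Lx / \<delta>)" unfolding T_def real using dpos by simp
        define \<theta> where "\<theta> = Lx / \<delta>"
        have th0: "\<theta> \<ge> 0" unfolding \<theta>_def using Lx0 dpos by simp
        have key: "L + \<theta> * (k - \<delta>) \<le> c" using zL(2)[OF \<xi>W th0] TT unfolding k_def \<theta>_def
          by (simp add: algebra_simps)
        have "(1 - l) * L + l * Lx = (1 - l) * L + \<theta> * (\<delta> * l)" unfolding \<theta>_def using dpos by simp
        also have "\<dots> \<le> (1 - l) * L + \<theta> * ((1 - l) * (k - \<delta>))"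
          using kd2 th0 by (intro add_left_mono mult_left_mono) auto
        also have "\<dots> = (1 - l) * (L + \<theta> * (k - \<delta>))" by (simp add: algebra_simps)
        also have "\<dots> \<le> (1 - l) * c" using key l1 by (intro mult_left_mono) auto
        also have "\<dots> \<le> c" using c0 l0 by (simp add: algebra_simps)
        finally have le: "(1 - l) * L + l * Lx \<le> c" .
        have "Lstar \<mu> w \<le> ereal ((1 - l) * L + l * Lx)"
          unfolding w_def using zL(1) real l by (intro Lstar_convex) auto
        also have "\<dots> \<le> ereal c" using le by simp
        finally show False using phw c(2) by simp
      qed
    qed
  qed
qed

end
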